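(* The mechanism given by Algorithm 3 (defined in the context) is risk-averse truthful when all agents are hungry, i.e. when the domain of true densities, reports, and other agents' reports is the set of strictly positive piecewise-constant functions on $[0,1]$.
   Context: Algorithm 3 (for $n$ agents with strictly positive piecewise-constant densities $f_i:[0,1]\to\mathbb{R}_{>0}$, $v_i(X)=\int_X f_i$): for each agent $i$, let $0=x_0^{(i)}<x_1^{(i)}<\dots<x_{n-1}^{(i)}<x_n^{(i)}=1$ be the points with $v_i([x_j^{(i)},x_{j+1}^{(i)}))=\frac1n v_i([0,1])$ for all $j$. Set $c_0=0$ and $U=\{1,\dots,n\}$. For $j=1,\dots,n-1$: let $i_j\in U$ minimize $x_j^{(i)}$ over $i\in U$ (ties broken by smallest index), set $c_j=x_j^{(i_j)}$, give $[c_{j-1},c_j)$ to $i_j$, and remove $i_j$ from $U$. The remaining agent receives $[c_{n-1},1]$. A mechanism $\mathcal{M}$ is risk-averse truthful if for each agent $i$, each true density $f_i$ and each report $f_i'$ (in the domain), at least one holds: (1) for all reports $f_{-i}=(f_j)_{j\ne i}$ of the others, $v_i(\mathcal{M}_i(f_i,f_{-i}))\ge v_i(\mathcal{M}_i(f_i',f_{-i}))$; (2) there exist $f_{-i}$ with $v_i(\mathcal{M}_i(f_i',f_{-i}))<\frac1n v_i([0,1])$ (utilities w.r.t. the true $f_i$). *)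

theory Defs
  imports "HOL-Analysis.Analysis"
begin

text \<open>Densities are functions real => real; only their values on [0,1] matter.\<close>

definition piecewise_constant :: "(real \<Rightarrow> real) \<Rightarrow> bool" where
  "piecewise_constant f \<longleftrightarrow>
     (\<exists>P. finite P \<and> {0, 1} \<subseteq> P \<and> P \<subseteq> {0..1} \<and>
        (\<forall>a\<in>P. \<forall>b\<in>P. a < b \<and> {a<..<b} \<inter> P = {} \<longrightarrow>
           (\<exists>c. \<forall>x\<in>{a<..<b}. f x = c)))"

definition hungry :: "(real \<Rightarrow> real) \<Rightarrow> bool" where
  "hungry f \<longleftrightarrow> piecewise_constant f \<and> (\<forall>x\<in>{0..1}. f x > 0)"

definition val :: "(real \<Rightarrow> real) \<Rightarrow> real set \<Rightarrow> real" where
  "val f X = integral X f"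

text \<open>The points 0 = x_0 < x_1 < ... < x_n = 1 with v([x_j, x_{j+1})) = v([0,1])/n
  (extended by 1 beyond index n, to make the description unique).\<close>

definition cuts :: "(real \<Rightarrow> real) \<Rightarrow> nat \<Rightarrow> nat \<Rightarrow> real" where
  "cuts f n = (THE x. x 0 = 0 \<and> x n = 1 \<and> (\<forall>j<n. x j < x (Suc j)) \<and>
      (\<forall>j<n. val f {x j..<x (Suc j)} = val f {0..1} / real n) \<and>
      (\<forall>j>n. x j = 1))"

text \<open>Algorithm 3, agents indexed 0,...,n-1 (tie-breaking by smallest index).
  State after step j: (remaining agents U, last cut c_j, pieces assigned so far).\<close>

fun alg3_state :: "nat \<Rightarrow> (nat \<Rightarrow> real \<Rightarrow> real) \<Rightarrow> nat \<Rightarrow> nat set \<times> real \<times> (nat \<Rightarrow> real set)" where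
  "alg3_state n F 0 = ({..<n}, 0, (\<lambda>_. {}))"
| "alg3_state n F (Suc j) =
     (case alg3_state n F j of (U, c, A) \<Rightarrow>
        (let x = (\<lambda>i. cuts (F i) n (Suc j));
             i' = (LEAST i. i \<in> U \<and> (\<forall>k\<in>U. x i \<le> x k));
             c' = x i'
         in (U - {i'}, c', A(i' := {c..<c'}))))"

definition alg3 :: "nat \<Rightarrow> (nat \<Rightarrow> real \<Rightarrow> real) \<Rightarrow> nat \<Rightarrow> real set" where
  "alg3 n F i = (case alg3_state n F (n - 1) of (U, c, A) \<Rightarrow>
      if i \<in> U then {c..1} else A i)"

definition risk_averse_truthful ::
  "((real \<Rightarrow> real) \<Rightarrow> bool) \<Rightarrow> nat \<Rightarrow> ((nat \<Rightarrow> real \<Rightarrow> real) \<Rightarrow> nat \<Rightarrow> real set) \<Rightarrow> bool" where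
  "risk_averse_truthful D n M \<longleftrightarrow>
     (\<forall>i<n. \<forall>f f'. D f \<longrightarrow> D f' \<longrightarrow>
        (\<forall>F. (\<forall>j<n. j \<noteq> i \<longrightarrow> D (F j)) \<longrightarrow>
             val f (M (F(i := f)) i) \<ge> val f (M (F(i := f')) i))
      \<or> (\<exists>F. (\<forall>j<n. j \<noteq> i \<longrightarrow> D (F j)) \<and>
             val f (M (F(i := f')) i) < val f {0..1} / real n))"

end

theory Submission
  imports Defs
begin

lemma pc_gap:
  fixes h :: "real \<Rightarrow> real" and P :: "real set"
  assumes fin: "finite P" and P01: "{0,1} \<subseteq> P" "P \<subseteq> {0..1}"
    and H: "\<forall>a\<in>P. \<forall>b\<in>P. a < b \<and> {a<..<b} \<inter> P = {} \<longrightarrow> (\<exists>c. \<forall>x\<in>{a<..<b}. h x = c)"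
    and uv: "0 \<le> u" "u < v" "v \<le> 1" and gap: "{u<..<v} \<inter> P = {}"
  shows "\<exists>c. \<forall>t\<in>{u<..<v}. h t = c"
proof -
  define a where "a = Max {p\<in>P. p \<le> u}"
  define b where "b = Min {p\<in>P. v \<le> p}"
  have A: "finite {p\<in>P. p \<le> u}" "{p\<in>P. p \<le> u} \<noteq> {}" using fin P01 uv by auto
  have B: "finite {p\<in>P. v \<le> p}" "{p\<in>P. v \<le> p} \<noteq> {}" using fin P01 uv by auto
  have aP: "a \<in> P" "a \<le> u" using Max_in[OF A] unfolding a_def by auto
  have bP: "b \<in> P" "v \<le> b" using Min_in[OF B] unfolding b_def by auto
  have "{a<..<b} \<inter> P = {}"
  proof (rule ccontr)
    assume "{a<..<b} \<inter> P \<noteq> {}"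
    then obtain p where p: "p \<in> P" "a < p" "p < b" by auto
    show False
    proof (cases "p \<le> u")
      case True then have "p \<le> a" unfolding a_def using A p by auto
      then show False using p by simp
    next
      case False
      show False
      proof (cases "v \<le> p")
        case True then have "b \<le> p" unfolding b_def using B p by auto
        then show False using p by simp
      next
        case False2: False
        then have "p \<in> {u<..<v}" using \<open>\<not> p \<le> u\<close> by auto
        then show False using gap p by blast
      qed
    qed
  qed
  then obtain c where "\<forall>x\<in>{a<..<b}. h x = c" using H aP bP uv by force
  then show ?thesis using aP bP by force
qed

lemma pc_witness:
  fixes h :: "real \<Rightarrow> real"
  assumes "piecewise_constant h"
  obtains P where "finite P" "{0,1} \<subseteq> P" "P \<subseteq> {0..1}"
    "\<And>u v. 0 \<le> u \<Longrightarrow> u < v \<Longrightarrow> v \<le> 1 \<Longrightarrow> {u<..<v} \<inter> P = {} \<Longrightarrow> \<exists>c. \<forall>t\<in>{u<..<v}. h t = c"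
  using assms unfolding piecewise_constant_def by (metis pc_gap)

lemma gap_integrable:
  fixes h :: "real \<Rightarrow> real"
  assumes "\<exists>c. \<forall>t\<in>{u<..<v}. h t = c"
  shows "h integrable_on {u..v}"
proof -
  obtain c where c: "\<forall>t\<in>{u<..<v}. h t = c" using assms by blast
  show ?thesis
    by (rule integrable_spike_finite[where S="{u,v}" and f="\<lambda>_. c"]) (use c in auto)
qed

lemma hungry_integrable:
  assumes "hungry h"
  shows "h integrable_on {0..1}"
proof -
  obtain P where P: "finite P" "{0,1} \<subseteq> P" "P \<subseteq> {0..1}"
    and G: "\<And>u v. 0 \<le> u \<Longrightarrow> u < v \<Longrightarrow> v \<le> 1 \<Longrightarrow> {u<..<v} \<inter> P = {} \<Longrightarrow> \<exists>c. \<forall>t\<in>{u<..<v}. h t = c"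
    using assms unfolding hungry_def by (metis pc_witness)
  have "h integrable_on cbox 0 1"
  proof (rule integrable_on_little_subintervals, intro ballI)
    fix x :: real assume x: "x \<in> cbox 0 1"
    obtain d where d: "d > 0" "\<forall>p\<in>P. p \<noteq> x \<longrightarrow> d \<le> dist x p"
      using finite_set_avoid[OF P(1)] by blast
    show "\<exists>d>0. \<forall>u v. x \<in> cbox u v \<and> cbox u v \<subseteq> ball x d \<and> cbox u v \<subseteq> cbox 0 1 \<longrightarrow> h integrable_on cbox u v"
    proof (intro exI[of _ d] conjI allI impI)
      fix u v :: real
      assume uv: "x \<in> cbox u v \<and> cbox u v \<subseteq> ball x d \<and> cbox u v \<subseteq> cbox 0 1"
      then have ux: "u \<le> x" "x \<le> v" "0 \<le> u" "v \<le> 1" by auto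
      have ball: "\<And>t. u \<le> t \<Longrightarrow> t \<le> v \<Longrightarrow> dist x t < d" using uv by (auto simp: subset_iff)
      have noP: "\<And>t. u \<le> t \<Longrightarrow> t \<le> v \<Longrightarrow> t \<noteq> x \<Longrightarrow> t \<notin> P"
        using ball d(2) by force
      have i1: "h integrable_on {u..x}"
      proof (cases "u < x")
        case True
        have "{u<..<x} \<inter> P = {}"
        proof (rule ccontr)
          assume "{u<..<x} \<inter> P \<noteq> {}"
          then obtain t where "t \<in> P" "u < t" "t < x" by auto
          then show False using noP[of t] ux by auto
        qed
        then show ?thesis using G[of u x] True ux gap_integrable by auto
      next
        case False then have "{u..x} = cbox x x" using ux by auto
        then show ?thesis using integrable_on_refl by metis
      qed
      have i2: "h integrable_on {x..v}"
      proof (cases "x < v")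
        case True
        have "{x<..<v} \<inter> P = {}"
        proof (rule ccontr)
          assume "{x<..<v} \<inter> P \<noteq> {}"
          then obtain t where "t \<in> P" "x < t" "t < v" by auto
          then show False using noP[of t] ux by auto
        qed
        then show ?thesis using G[of x v] True ux gap_integrable by auto
      next
        case False then have "{x..v} = cbox x x" using ux by auto
        then show ?thesis using integrable_on_refl by metis
      qed
      show "h integrable_on cbox u v" using Henstock_Kurzweil_Integration.integrable_combine[OF ux(1,2) i1 i2] by simp
    qed (use d in auto)
  qed
  then show ?thesis by simp
qed

lemma pc_point:
  fixes h :: "real \<Rightarrow> real" and P :: "real set"
  assumes fin: "finite P" and P01: "{0,1} \<subseteq> P" "P \<subseteq> {0..1}"
    and H: "\<forall>a\<in>P. \<forall>b\<in>P. a < b \<and> {a<..<b} \<inter> P = {} \<longrightarrow> (\<exists>c. \<forall>x\<in>{a<..<b}. h x = c)"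
    and x: "x \<in> {0..1}" "x \<notin> P"
  shows "\<exists>a\<in>P. \<exists>b\<in>P. a < x \<and> x < b \<and> (\<forall>t\<in>{a<..<b}. h t = h x)"
proof -
  define a where "a = Max {p\<in>P. p < x}"
  define b where "b = Min {p\<in>P. x < p}"
  have x01: "0 < x" "x < 1" using x P01 by (auto simp: less_eq_real_def)
  have A: "finite {p\<in>P. p < x}" "{p\<in>P. p < x} \<noteq> {}" using fin P01 x01 by auto
  have B: "finite {p\<in>P. x < p}" "{p\<in>P. x < p} \<noteq> {}" using fin P01 x01 by auto
  have aP: "a \<in> P" "a < x" using Max_in[OF A] unfolding a_def by auto
  have bP: "b \<in> P" "x < b" using Min_in[OF B] unfolding b_def by auto
  have "{a<..<b} \<inter> P = {}"
  proof (rule ccontr)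
    assume "{a<..<b} \<inter> P \<noteq> {}"
    then obtain p where p: "p \<in> P" "a < p" "p < b" by auto
    show False
    proof (cases "p < x")
      case True then have "p \<le> a" unfolding a_def using A p by auto
      then show False using p by simp
    next
      case False
      then have "x < p" using p x by (cases "p = x") auto
      then have "b \<le> p" unfolding b_def using B p by auto
      then show False using p by simp
    qed
  qed
  then obtain c where "\<forall>t\<in>{a<..<b}. h t = c" using H aP bP by force
  then show ?thesis using aP bP by force
qed

lemma hungry_lb:
  assumes "hungry h"
  shows "\<exists>\<mu>>0. \<forall>x\<in>{0..1}. \<mu> \<le> h x"
proof -
  obtain P where P: "finite P" "{0,1} \<subseteq> P" "P \<subseteq> {0..1}"
    and H: "\<forall>a\<in>P. \<forall>b\<in>P. a < b \<and> {a<..<b} \<inter> P = {} \<longrightarrow> (\<exists>c. \<forall>x\<in>{a<..<b}. h x = c)"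
    using assms unfolding hungry_def piecewise_constant_def by blast
  have pos: "\<forall>x\<in>{0..1}. h x > 0" using assms unfolding hungry_def by blast
  define M where "M = (\<lambda>p::real\<times>real. (fst p + snd p) / 2) ` (P \<times> P)"
  define T where "T = P \<union> M"
  have Tf: "finite T" using P(1) unfolding T_def M_def by simp
  have M01: "M \<subseteq> {0..1}"
  proof
    fix m assume "m \<in> M"
    then obtain a b where ab: "a \<in> P" "b \<in> P" "m = (a + b) / 2" unfolding M_def by auto
    have "a \<in> {0..1}" "b \<in> {0..1}" using P(3) ab by auto
    then show "m \<in> {0..1}" using ab by simp
  qed
  have T01: "T \<subseteq> {0..1}" using P(3) M01 unfolding T_def by simp
  have Tne: "T \<noteq> {}" using P(2) unfolding T_def by blast
  define \<mu> where "\<mu> = Min (h ` T)"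
  have "\<mu> \<in> h ` T" unfolding \<mu>_def using Tf Tne by simp
  then obtain t0 where "t0 \<in> T" "\<mu> = h t0" by blast
  then have mpos: "\<mu> > 0" using T01 pos by blast
  have "\<forall>x\<in>{0..1}. \<mu> \<le> h x"
  proof
    fix x :: real assume x: "x \<in> {0..1}"
    have "\<exists>t\<in>T. h x = h t"
    proof (cases "x \<in> P")
      case True then show ?thesis unfolding T_def by blast
    next
      case False
      then obtain a b where ab: "a \<in> P" "b \<in> P" "a < x" "x < b" "\<forall>t\<in>{a<..<b}. h t = h x"
        using pc_point[OF P H x] by blast
      have "(a + b) / 2 \<in> M" unfolding M_def using ab by (intro image_eqI[where x="(a,b)"]) simp_all
      then have "(a + b) / 2 \<in> T" unfolding T_def by blast
      moreover have "(a + b) / 2 \<in> {a<..<b}" using ab by simp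
      then have "h ((a+b)/2) = h x" using ab(5) by blast
      ultimately show ?thesis by metis
    qed
    then obtain t where t: "t \<in> T" "h x = h t" by blast
    have "Min (h ` T) \<le> h t" using Tf t(1) by simp
    then show "\<mu> \<le> h x" unfolding \<mu>_def using t by simp
  qed
  then show ?thesis using mpos by blast
qed

definition Gf :: "(real \<Rightarrow> real) \<Rightarrow> real \<Rightarrow> real" where
  "Gf h t = integral {0..t} h"

lemma hungry_int_sub:
  assumes "hungry h" "0 \<le> a" "b \<le> 1"
  shows "h integrable_on {a..b}"
  using integrable_subinterval_real[OF hungry_integrable[OF assms(1)]] assms
  by (cases "a \<le> b") auto

lemma Icc_G:
  assumes "hungry h" "0 \<le> a" "a \<le> b" "b \<le> 1"
  shows "integral {a..b} h = Gf h b - Gf h a"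
  using Henstock_Kurzweil_Integration.integral_combine[of 0 a b h] hungry_int_sub[of h 0 b] assms unfolding Gf_def by auto

lemma Ico_Icc:
  fixes h :: "real \<Rightarrow> real"
  shows "integral {a..<b} h = integral {a..b} h"
proof (rule integral_spike_set)
  show "negligible {x \<in> {a..<b} - {a..b}. h x \<noteq> 0}" by (rule negligible_subset[of "{}"]) auto
  show "negligible {x \<in> {a..b} - {a..<b}. h x \<noteq> 0}" by (rule negligible_subset[of "{b}"]) auto
qed

lemma val_Ico:
  assumes "hungry h" "0 \<le> a" "a \<le> b" "b \<le> 1"
  shows "val h {a..<b} = Gf h b - Gf h a"
  using Icc_G[OF assms] Ico_Icc unfolding val_def by metis

lemma val_Icc:
  assumes "hungry h" "0 \<le> a" "a \<le> b" "b \<le> 1"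
  shows "val h {a..b} = Gf h b - Gf h a"
  using Icc_G[OF assms] unfolding val_def by metis

lemma G0: "Gf h 0 = 0" unfolding Gf_def by simp

lemma val01: "val h {0..1} = Gf h 1" unfolding val_def Gf_def by simp

lemma G_strict:
  assumes "hungry h" "0 \<le> a" "a < b" "b \<le> 1"
  shows "Gf h a < Gf h b"
proof -
  obtain \<mu> where mu: "\<mu> > 0" "\<forall>x\<in>{0..1}. \<mu> \<le> h x" using hungry_lb[OF assms(1)] by blast
  have "integral {a..b} (\<lambda>_. \<mu>) \<le> integral {a..b} h"
    by (rule integral_le) (use hungry_int_sub[of h a b] assms mu in auto)
  moreover have "integral {a..b} (\<lambda>_. \<mu>) = (b - a) * \<mu>" using assms by simp
  moreover have "(b - a) * \<mu> > 0" using mu assms by simp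
  moreover have "integral {a..b} h = Gf h b - Gf h a" using Icc_G[of h a b] assms by simp
  ultimately show ?thesis by linarith
qed

lemma G_mono:
  assumes "hungry h" "0 \<le> a" "a \<le> b" "b \<le> 1"
  shows "Gf h a \<le> Gf h b"
proof (cases "a = b")
  case False
  then have "a < b" using assms(3) by linarith
  then show ?thesis using G_strict[OF assms(1,2) \<open>a < b\<close> assms(4)] by simp
qed simp

lemma G_cont:
  assumes "hungry h"
  shows "continuous_on {0..1} (Gf h)"
proof -
  have e: "Gf h = (\<lambda>x. integral {0..x} h)" by (rule ext) (simp add: Gf_def)
  show ?thesis unfolding e by (rule indefinite_integral_continuous_1[OF hungry_integrable[OF assms]])
qed

definition cspec :: "(real \<Rightarrow> real) \<Rightarrow> nat \<Rightarrow> (nat \<Rightarrow> real) \<Rightarrow> bool" where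
  "cspec f n x \<longleftrightarrow> (x 0 = 0 \<and> x n = 1 \<and> (\<forall>j<n. x j < x (Suc j)) \<and>
      (\<forall>j<n. val f {x j..<x (Suc j)} = val f {0..1} / real n) \<and>
      (\<forall>j>n. x j = 1))"

lemma cuts_eq: "cuts f n = (THE x. cspec f n x)"
  unfolding cuts_def cspec_def ..

lemma chain_le:
  fixes x :: "nat \<Rightarrow> real"
  assumes "\<forall>j<n. x j < x (Suc j)" "k \<le> l" "l \<le> n"
  shows "x k \<le> x l"
  using assms(2,3)
proof (induction l)
  case 0 then show ?case by simp
next
  case (Suc l)
  show ?case
  proof (cases "k = Suc l")
    case False
    then have "x k \<le> x l" using Suc by simp
    moreover have "x l < x (Suc l)" using assms(1) Suc.prems by simp
    ultimately show ?thesis by simp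
  qed simp
qed

lemma chain_less:
  fixes x :: "nat \<Rightarrow> real"
  assumes "\<forall>j<n. x j < x (Suc j)" "k < l" "l \<le> n"
  shows "x k < x l"
proof -
  obtain l' where l': "l = Suc l'" using assms(2) by (cases l) auto
  have "x k \<le> x l'" using chain_le[OF assms(1), of k l'] assms l' by simp
  moreover have "x l' < x l" using assms l' by simp
  ultimately show ?thesis by simp
qed

lemma cspec_range:
  assumes "cspec f n x" "k \<le> n"
  shows "0 \<le> x k" "x k \<le> 1"
proof -
  have c: "\<forall>j<n. x j < x (Suc j)" "x 0 = 0" "x n = 1" using assms unfolding cspec_def by auto
  show "0 \<le> x k" using chain_le[OF c(1), of 0 k] assms c by simp
  show "x k \<le> 1" using chain_le[OF c(1), of k n] assms c by simp
qed

lemma cspec_G: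
  assumes h: "hungry h" and n: "n \<ge> 1" and c: "cspec h n x"
  shows "k \<le> n \<Longrightarrow> Gf h (x k) = real k * Gf h 1 / real n"
proof (induction k)
  case 0 then show ?case using c unfolding cspec_def by (simp add: G0)
next
  case (Suc k)
  have ck: "x k < x (Suc k)" "val h {x k..<x (Suc k)} = val h {0..1} / real n"
    using c Suc.prems unfolding cspec_def by auto
  have "val h {x k..<x (Suc k)} = Gf h (x (Suc k)) - Gf h (x k)"
    by (rule val_Ico[OF h]) (use cspec_range[OF c, of k] cspec_range[OF c, of "Suc k"] ck Suc.prems in auto)
  then have "Gf h (x (Suc k)) = Gf h (x k) + Gf h 1 / real n" using ck val01 by simp
  also have "... = real (Suc k) * Gf h 1 / real n" using Suc by (simp add: field_simps)
  finally show ?case .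
qed

lemma G_inj:
  assumes "hungry h" "0 \<le> a" "a \<le> 1" "0 \<le> b" "b \<le> 1" "Gf h a = Gf h b"
  shows "a = b"
proof (rule ccontr)
  assume "a \<noteq> b"
  then have "a < b \<or> b < a" by linarith
  then show False using G_strict[OF assms(1), of a b] G_strict[OF assms(1), of b a] assms by auto
qed

lemma V_pos:
  assumes "hungry h" shows "Gf h 1 > 0"
  using G_strict[OF assms, of 0 1] G0 by simp

lemma cspec_unique:
  assumes h: "hungry h" and n: "n \<ge> 1" and cx: "cspec h n x" and cy: "cspec h n y"
  shows "x = y"
proof (rule ext)
  fix k
  show "x k = y k"
  proof (cases "k \<le> n")
    case True
    have "Gf h (x k) = Gf h (y k)" using cspec_G[OF h n cx True] cspec_G[OF h n cy True] by simp
    then show ?thesis using G_inj[OF h] cspec_range[OF cx True] cspec_range[OF cy True] by blast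
  next
    case False then show ?thesis using cx cy unfolding cspec_def by auto
  qed
qed

lemma cspec_exists:
  assumes h: "hungry h" and n: "n \<ge> 1"
  shows "\<exists>x. cspec h n x"
proof -
  define V where "V = Gf h 1"
  have V: "V > 0" using V_pos[OF h] V_def by simp
  have ex: "\<exists>t. 0 \<le> t \<and> t \<le> 1 \<and> Gf h t = real k * V / real n" if "k \<le> n" for k
  proof -
    have "real k * V / real n \<le> V" using that n V by (simp add: field_simps)
    moreover have "0 \<le> real k * V / real n" using V by simp
    ultimately show ?thesis using IVT'[of "Gf h" 0 "real k * V / real n" 1] G_cont[OF h] G0 V_def by auto
  qed
  define x where "x k = (if k \<le> n then (SOME t. 0 \<le> t \<and> t \<le> 1 \<and> Gf h t = real k * V / real n) else 1)" for k
  have xk: "0 \<le> x k \<and> x k \<le> 1 \<and> Gf h (x k) = real k * V / real n" if "k \<le> n" for k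
    unfolding x_def using someI_ex[OF ex[OF that]] that by simp
  have "x 0 = 0" using G_inj[OF h, of "x 0" 0] xk[of 0] G0 by simp
  moreover have "x n = 1" using G_inj[OF h, of "x n" 1] xk[of n] V_def n by simp
  moreover have "\<forall>j<n. x j < x (Suc j)"
  proof (intro allI impI)
    fix j assume j: "j < n"
    have "real j * V / real n < real (Suc j) * V / real n" using V n by (intro divide_strict_right_mono) auto
    then have "Gf h (x j) < Gf h (x (Suc j))" using xk[of j] xk[of "Suc j"] j by simp
    then show "x j < x (Suc j)" using G_mono[OF h, of "x (Suc j)" "x j"] xk[of j] xk[of "Suc j"] j
      by (meson less_le_not_le linorder_le_less_linear Suc_leI less_imp_le_nat)
  qed
  moreover have "\<forall>j<n. val h {x j..<x (Suc j)} = val h {0..1} / real n"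
  proof (intro allI impI)
    fix j assume j: "j < n"
    have "x j < x (Suc j)" using calculation j by blast
    then have "val h {x j..<x (Suc j)} = Gf h (x (Suc j)) - Gf h (x j)"
      using val_Ico[OF h, of "x j" "x (Suc j)"] xk[of j] xk[of "Suc j"] j by simp
    also have "... = V / real n" using xk[of j] xk[of "Suc j"] j by (simp add: field_simps)
    finally show "val h {x j..<x (Suc j)} = val h {0..1} / real n" using val01 V_def by simp
  qed
  moreover have "\<forall>j>n. x j = 1" unfolding x_def by simp
  ultimately show ?thesis unfolding cspec_def by blast
qed

lemma cuts_spec:
  assumes h: "hungry h" and n: "n \<ge> 1"
  shows "cspec h n (cuts h n)"
proof -
  obtain x where x: "cspec h n x" using cspec_exists[OF h n] by blast
  have "cuts h n = x" unfolding cuts_eq by (rule the_equality[of "cspec h n" x, OF x]) (use cspec_unique[OF h n x] in blast)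
  then show ?thesis using x by simp
qed

lemma cuts_unique:
  assumes h: "hungry h" and n: "n \<ge> 1" and y: "cspec h n y"
  shows "cuts h n = y"
  using cspec_unique[OF h n cuts_spec[OF h n] y] .

definition stepd :: "nat \<Rightarrow> (nat \<Rightarrow> real) \<Rightarrow> real \<Rightarrow> real" where
  "stepd n z t = (\<Sum>k<n. indicator {z k..z (Suc k)} t / (z (Suc k) - z k))"

lemma stepd_inside:
  fixes z :: "nat \<Rightarrow> real"
  assumes inc: "\<forall>j<n. z j < z (Suc j)" and k: "k < n" and t: "z k < t" "t < z (Suc k)"
  shows "stepd n z t = 1 / (z (Suc k) - z k)"
proof -
  have "stepd n z t = (\<Sum>j\<in>{k}. indicator {z j..z (Suc j)} t / (z (Suc j) - z j))"
    unfolding stepd_def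
  proof (rule sum.mono_neutral_right)
    show "\<forall>j\<in>{..<n} - {k}. indicator {z j..z (Suc j)} t / (z (Suc j) - z j) = 0"
    proof
      fix j assume j: "j \<in> {..<n} - {k}"
      have "t \<notin> {z j..z (Suc j)}"
      proof (cases "j < k")
        case True
        then have "z (Suc j) \<le> z k" using chain_le[OF inc, of "Suc j" k] k by simp
        then show ?thesis using t by auto
      next
        case False
        then have "k < j" using j by auto
        then have "z (Suc k) \<le> z j" using chain_le[OF inc, of "Suc k" j] j by simp
        then show ?thesis using t by auto
      qed
      then show "indicator {z j..z (Suc j)} t / (z (Suc j) - z j) = 0" by simp
    qed
  qed (use k in auto)
  also have "... = 1 / (z (Suc k) - z k)" using t by simp
  finally show ?thesis .
qed

lemma step_density:
  fixes z :: "nat \<Rightarrow> real"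
  assumes n: "n \<ge> 1" and z0: "z 0 = 0" and zn: "z n = 1" and inc: "\<forall>j<n. z j < z (Suc j)"
    and zb: "\<forall>j>n. z j = 1"
  shows "\<exists>g. hungry g \<and> cuts g n = z"
proof -
  define g where "g = stepd n z"
  define P where "P = z ` {..n}"
  have P01: "P \<subseteq> {0..1}"
  proof
    fix p assume "p \<in> P"
    then obtain k where k: "k \<le> n" "p = z k" unfolding P_def by auto
    have "z 0 \<le> z k" "z k \<le> z n" using chain_le[OF inc] k by auto
    then show "p \<in> {0..1}" using k z0 zn by simp
  qed
  have pc: "piecewise_constant g"
    unfolding piecewise_constant_def
  proof (intro exI[of _ P] conjI ballI impI)
    show "finite P" unfolding P_def by simp
    show "{0, 1} \<subseteq> P" unfolding P_def using z0 zn by (auto intro: image_eqI[where x=0] image_eqI[where x=n])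
    show "P \<subseteq> {0..1}" by (rule P01)
    fix a b assume ab: "a \<in> P" "b \<in> P" "a < b \<and> {a<..<b} \<inter> P = {}"
    show "\<exists>c. \<forall>x\<in>{a<..<b}. g x = c"
    proof (intro exI[of _ "g ((a+b)/2)"] ballI)
      fix x assume x: "x \<in> {a<..<b}"
      define m where "m = (a+b)/2"
      have m: "a < m" "m < b" using ab unfolding m_def by auto
      have "indicator {z k..z (Suc k)} x = (indicator {z k..z (Suc k)} m :: real)" if "k < n" for k
      proof -
        have "z k \<in> P" "z (Suc k) \<in> P" unfolding P_def using that by auto
        then have "z k \<notin> {a<..<b}" "z (Suc k) \<notin> {a<..<b}" using ab by auto
        then have "(z k \<le> x \<and> x \<le> z (Suc k)) \<longleftrightarrow> (z k \<le> m \<and> m \<le> z (Suc k))" using x m by auto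
        then show ?thesis by (simp add: indicator_def)
      qed
      then show "g x = g ((a+b)/2)" unfolding g_def stepd_def m_def[symmetric] by (intro sum.cong) auto
    qed
  qed
  have pos: "\<forall>t\<in>{0..1}. g t > 0"
  proof
    fix t :: real assume t: "t \<in> {0..1}"
    define K where "K = {k. k \<le> n \<and> z k \<le> t}"
    have Kf: "finite K" "K \<noteq> {}" unfolding K_def using t z0 by auto
    define k0 where "k0 = Max K"
    have k0: "k0 \<le> n" "z k0 \<le> t" using Max_in[OF Kf] unfolding k0_def K_def by auto
    have "\<exists>k<n. z k \<le> t \<and> t \<le> z (Suc k)"
    proof (cases "k0 = n")
      case True
      then have "t = 1" using k0 zn t by auto
      moreover have "z (n - 1) \<le> 1" using chain_le[OF inc, of "n-1" n] zn by simp
      ultimately show ?thesis using n zn by (intro exI[of _ "n-1"]) auto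
    next
      case False
      then have "Suc k0 \<notin> K" using Max_ge[OF Kf(1), of "Suc k0"] unfolding k0_def by auto
      then have "t < z (Suc k0)" using k0 False unfolding K_def by auto
      then show ?thesis using k0 False by (intro exI[of _ k0]) auto
    qed
    then obtain k where k: "k < n" "z k \<le> t" "t \<le> z (Suc k)" by blast
    have nn: "\<forall>j\<in>{..<n}. 0 \<le> indicator {z j..z (Suc j)} t / (z (Suc j) - z j)"
      using inc by (auto intro!: divide_nonneg_pos simp: indicator_def)
    have "indicator {z k..z (Suc k)} t / (z (Suc k) - z k) \<le> g t"
      unfolding g_def stepd_def by (rule member_le_sum) (use nn k in auto)
    moreover have "z k < z (Suc k)" using k inc by simp
    then have "indicator {z k..z (Suc k)} t / (z (Suc k) - z k) > 0" using k by simp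
    ultimately show "g t > 0" by linarith
  qed
  have h: "hungry g" unfolding hungry_def using pc pos by blast
  have zr: "0 \<le> z k \<and> z k \<le> 1" if "k \<le> n" for k
    using chain_le[OF inc, of 0 k] chain_le[OF inc, of k n] that z0 zn by simp
  have piece: "integral {z k..z (Suc k)} g = 1" if k: "k < n" for k
  proof -
    have "integral {z k..z (Suc k)} g = integral {z k..z (Suc k)} (\<lambda>_. 1 / (z (Suc k) - z k))"
    proof (rule integral_spike[of "{z k, z (Suc k)}"])
      show "negligible {z k, z (Suc k)}" by auto
      fix t assume "t \<in> {z k..z (Suc k)} - {z k, z (Suc k)}"
      then show "1 / (z (Suc k) - z k) = g t" unfolding g_def using stepd_inside[OF inc k] by auto
    qed
    also have "... = 1"
    proof -
      have "z k < z (Suc k)" using inc k by simp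
      then show ?thesis by simp
    qed
    finally show ?thesis .
  qed
  have Gz: "Gf g (z k) = real k" if "k \<le> n" for k
    using that
  proof (induction k)
    case 0 then show ?case using z0 G0 by simp
  next
    case (Suc k)
    have lt: "z k < z (Suc k)" using inc Suc.prems by simp
    have "integral {z k..z (Suc k)} g = Gf g (z (Suc k)) - Gf g (z k)"
      by (rule Icc_G[OF h]) (use zr[of k] zr[of "Suc k"] lt Suc.prems in auto)
    then show ?case using piece[of k] Suc by simp
  qed
  have "cspec g n z"
    unfolding cspec_def
  proof (intro conjI allI impI)
    fix j assume j: "j < n"
    have "val g {z j..<z (Suc j)} = 1" using piece[OF j] Ico_Icc unfolding val_def by metis
    moreover have "val g {0..1} = real n" using val01 Gz[of n] zn by simp
    ultimately show "val g {z j..<z (Suc j)} = val g {0..1} / real n" using n by simp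
  qed (use z0 zn inc zb in auto)
  then show ?thesis using cuts_unique[OF h n] h by blast
qed

lemma step_eq:
  assumes "alg3_state n F j = (U, c, A)"
    and "w = (LEAST l. l \<in> U \<and> (\<forall>k\<in>U. cuts (F l) n (Suc j) \<le> cuts (F k) n (Suc j)))"
  shows "alg3_state n F (Suc j) = (U - {w}, cuts (F w) n (Suc j), A(w := {c..<cuts (F w) n (Suc j)}))"
  using assms by (simp add: Let_def)

lemma least_prop:
  fixes x :: "nat \<Rightarrow> real"
  assumes "finite U" "U \<noteq> {}" "w = (LEAST l. l \<in> U \<and> (\<forall>k\<in>U. x l \<le> x k))"
  shows "w \<in> U \<and> (\<forall>k\<in>U. x w \<le> x k)"
proof -
  have "Min (x ` U) \<in> x ` U" using assms by simp
  then obtain l where l: "l \<in> U" "x l = Min (x ` U)" by auto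
  have "\<forall>k\<in>U. x l \<le> x k" using l assms(1) by simp
  then have ex: "\<exists>l. l \<in> U \<and> (\<forall>k\<in>U. x l \<le> x k)" using l by blast
  show ?thesis unfolding assms(3) by (rule LeastI_ex[OF ex])
qed

lemma state_card:
  "j \<le> n - 1 \<Longrightarrow> fst (alg3_state n F j) \<subseteq> {..<n} \<and> card (fst (alg3_state n F j)) = n - j"
proof (induction j)
  case 0 then show ?case by simp
next
  case (Suc j)
  obtain U c A where S: "alg3_state n F j = (U, c, A)" by (cases "alg3_state n F j") auto
  define w where "w = (LEAST l. l \<in> U \<and> (\<forall>k\<in>U. cuts (F l) n (Suc j) \<le> cuts (F k) n (Suc j)))"
  have IH: "U \<subseteq> {..<n}" "card U = n - j" using Suc S by auto
  have fU: "finite U" using IH(1) finite_subset by blast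
  have "U \<noteq> {}" using IH Suc.prems by auto
  then have w: "w \<in> U" using least_prop[OF fU, of w "\<lambda>l. cuts (F l) n (Suc j)"] w_def by blast
  have "alg3_state n F (Suc j) = (U - {w}, cuts (F w) n (Suc j), A(w := {c..<cuts (F w) n (Suc j)}))"
    using step_eq[OF S w_def] .
  then show ?case using IH w fU by auto
qed

lemma state_dep:
  assumes "\<forall>l. cuts (F l) n = cuts (G l) n"
  shows "alg3_state n F j = alg3_state n G j"
  by (induction j) (simp_all add: assms)

lemma alg3_dep:
  assumes "\<forall>l. cuts (F l) n = cuts (G l) n"
  shows "alg3 n F = alg3 n G"
  unfolding alg3_def using state_dep[OF assms] by simp

lemma other_in:
  assumes "finite U" "card U \<ge> 2" "i \<in> U"
  shows "\<exists>l\<in>U. l \<noteq> i"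
proof (rule ccontr)
  assume "\<not> ?thesis"
  then have "U \<subseteq> {i}" by auto
  then have "card U \<le> card {i}" by (intro card_mono) auto
  then show False using assms by simp
qed

lemma phase1:
  assumes n: "n \<ge> 1" and i: "i < n" and m0: "m0 < n"
    and Fi: "cuts (F i) n = y" and Fo: "\<forall>l. l \<noteq> i \<longrightarrow> cuts (F l) n = z" and z0: "z 0 = 0"
    and zy: "\<forall>k. 1 \<le> k \<and> k \<le> m0 \<longrightarrow> z k < y k"
  shows "j \<le> m0 \<Longrightarrow> i \<in> fst (alg3_state n F j) \<and> fst (snd (alg3_state n F j)) = z j"
proof (induction j)
  case 0 then show ?case using i z0 by simp
next
  case (Suc j)
  obtain U c A where S: "alg3_state n F j = (U, c, A)" by (cases "alg3_state n F j") auto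
  define w where "w = (LEAST l. l \<in> U \<and> (\<forall>k\<in>U. cuts (F l) n (Suc j) \<le> cuts (F k) n (Suc j)))"
  have IH: "i \<in> U" "c = z j" using Suc S by auto
  have C: "U \<subseteq> {..<n}" "card U = n - j" using state_card[of j n F] S Suc.prems m0 by auto
  have fU: "finite U" using C(1) finite_subset by blast
  have "U \<noteq> {}" using IH by auto
  then have w: "w \<in> U" "\<forall>k\<in>U. cuts (F w) n (Suc j) \<le> cuts (F k) n (Suc j)"
    using least_prop[OF fU, of w "\<lambda>l. cuts (F l) n (Suc j)"] w_def by blast+
  have "2 \<le> card U" using C Suc.prems m0 by simp
  then obtain l where l: "l \<in> U" "l \<noteq> i" using other_in[OF fU _ IH(1)] by blast
  have zlt: "z (Suc j) < y (Suc j)" using zy Suc.prems by simp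
  have wi: "w \<noteq> i"
  proof
    assume "w = i"
    then have "cuts (F i) n (Suc j) \<le> cuts (F l) n (Suc j)" using w l by blast
    then show False using Fi Fo l zlt by auto
  qed
  have "alg3_state n F (Suc j) = (U - {w}, cuts (F w) n (Suc j), A(w := {c..<cuts (F w) n (Suc j)}))"
    using step_eq[OF S w_def] .
  then show ?case using IH wi Fo by simp
qed

lemma sim_last:
  assumes n: "n \<ge> 1" and i: "i < n"
    and Fi: "cuts (F i) n = y" and Fo: "\<forall>l. l \<noteq> i \<longrightarrow> cuts (F l) n = z" and z0: "z 0 = 0"
    and zy: "\<forall>k. 1 \<le> k \<and> k \<le> n - 1 \<longrightarrow> z k < y k"
  shows "alg3 n F i = {z (n - 1)..1}"
proof -
  have "i \<in> fst (alg3_state n F (n-1)) \<and> fst (snd (alg3_state n F (n-1))) = z (n-1)"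
    using phase1[OF n i _ Fi Fo z0 zy, of "n-1"] n by simp
  then show ?thesis unfolding alg3_def by (cases "alg3_state n F (n - 1)") auto
qed

lemma sim_mid:
  assumes n: "n \<ge> 1" and i: "i < n" and m0: "Suc m0 < n"
    and Fi: "cuts (F i) n = y" and Fo: "\<forall>l. l \<noteq> i \<longrightarrow> cuts (F l) n = z" and z0: "z 0 = 0"
    and zy: "\<forall>k. 1 \<le> k \<and> k \<le> m0 \<longrightarrow> z k < y k"
    and yz: "y (Suc m0) < z (Suc m0)"
  shows "alg3 n F i = {z m0..<y (Suc m0)}"
proof -
  have ph2: "i \<notin> fst (alg3_state n F (Suc m0 + d)) \<and> snd (snd (alg3_state n F (Suc m0 + d))) i = {z m0..<y (Suc m0)}"
    if "Suc m0 + d \<le> n - 1" for d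
    using that
  proof (induction d)
    case 0
    obtain U c A where S: "alg3_state n F m0 = (U, c, A)" by (cases "alg3_state n F m0") auto
    define w where "w = (LEAST l. l \<in> U \<and> (\<forall>k\<in>U. cuts (F l) n (Suc m0) \<le> cuts (F k) n (Suc m0)))"
    have P1: "i \<in> U" "c = z m0" using phase1[OF n i _ Fi Fo z0 zy, of m0] m0 S by auto
    have C: "U \<subseteq> {..<n}" "card U = n - m0" using state_card[of m0 n F] S m0 by auto
    have fU: "finite U" using C(1) finite_subset by blast
    have "U \<noteq> {}" using P1 by auto
    then have w: "w \<in> U" "\<forall>k\<in>U. cuts (F w) n (Suc m0) \<le> cuts (F k) n (Suc m0)"
      using least_prop[OF fU, of w "\<lambda>l. cuts (F l) n (Suc m0)"] w_def by blast+
    have wi: "w = i"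
    proof (rule ccontr)
      assume "w \<noteq> i"
      then have "cuts (F w) n (Suc m0) \<le> cuts (F i) n (Suc m0)" using w P1 by blast
      then show False using Fi Fo \<open>w \<noteq> i\<close> yz by auto
    qed
    have "alg3_state n F (Suc m0) = (U - {w}, cuts (F w) n (Suc m0), A(w := {c..<cuts (F w) n (Suc m0)}))"
      using step_eq[OF S w_def] .
    then show ?case using wi P1 Fi by simp
  next
    case (Suc d)
    define j where "j = Suc m0 + d"
    obtain U c A where S: "alg3_state n F j = (U, c, A)" by (cases "alg3_state n F j") auto
    define w where "w = (LEAST l. l \<in> U \<and> (\<forall>k\<in>U. cuts (F l) n (Suc j) \<le> cuts (F k) n (Suc j)))"
    have IH: "i \<notin> U" "A i = {z m0..<y (Suc m0)}" using Suc S j_def by auto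
    have C: "U \<subseteq> {..<n}" "card U = n - j" using state_card[of j n F] S Suc.prems j_def by auto
    have fU: "finite U" using C(1) finite_subset by blast
    have "U \<noteq> {}" using C Suc.prems j_def by auto
    then have w: "w \<in> U"
      using least_prop[OF fU, of w "\<lambda>l. cuts (F l) n (Suc j)"] w_def by blast
    have "alg3_state n F (Suc j) = (U - {w}, cuts (F w) n (Suc j), A(w := {c..<cuts (F w) n (Suc j)}))"
      using step_eq[OF S w_def] .
    moreover have "w \<noteq> i" using w IH by blast
    ultimately show ?case using IH j_def by simp
  qed
  have e: "Suc m0 + (n - 1 - Suc m0) = n - 1" using m0 by simp
  have d: "Suc m0 + (n - 1 - Suc m0) \<le> n - 1" using m0 by simp
  have "i \<notin> fst (alg3_state n F (n-1)) \<and> snd (snd (alg3_state n F (n-1))) i = {z m0..<y (Suc m0)}"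
    using ph2[OF d] unfolding e .
  then show ?thesis unfolding alg3_def by (cases "alg3_state n F (n - 1)") auto
qed

theorem mainTheorem10:
  fixes n :: nat
  assumes "n \<ge> 1"
  shows "risk_averse_truthful hungry n (alg3 n)"
  unfolding risk_averse_truthful_def
proof (intro allI impI)
  have n: "n \<ge> 1" by (rule assms)
  fix i f f'
  assume i: "i < n" and hf: "hungry f" and hf': "hungry f'"
  define y where "y = cuts f' n"
  have cy: "cspec f' n y" unfolding y_def by (rule cuts_spec[OF hf' n])
  have y0: "y 0 = 0" and yn: "y n = 1" and yinc: "\<And>j. j < n \<Longrightarrow> y j < y (Suc j)"
    and yb: "\<forall>j>n. y j = 1" using cy unfolding cspec_def by auto
  have yr: "0 \<le> y k" "y k \<le> 1" if "k \<le> n" for k using cspec_range[OF cy that] by auto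
  define V where "V = Gf f 1"
  have V: "V > 0" unfolding V_def by (rule V_pos[OF hf])
  define d where "d k = Gf f (y (Suc k)) - Gf f (y k)" for k
  show "(\<forall>F. (\<forall>j<n. j \<noteq> i \<longrightarrow> hungry (F j)) \<longrightarrow>
            val f (alg3 n (F(i := f')) i) \<le> val f (alg3 n (F(i := f)) i)) \<or>
        (\<exists>F. (\<forall>j<n. j \<noteq> i \<longrightarrow> hungry (F j)) \<and>
            val f (alg3 n (F(i := f')) i) < val f {0..1} / real n)"
  proof (cases "\<forall>k<n. V / real n \<le> d k")
    case True
    have tele: "(\<Sum>k<n. d k) = V"
      unfolding d_def using sum_lessThan_telescope[of "\<lambda>k. Gf f (y k)" n] y0 yn G0 V_def by simp
    have deq: "d k = V / real n" if k: "k < n" for k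
    proof (rule ccontr)
      assume "d k \<noteq> V / real n"
      then have "V / real n < d k" using True k by force
      then have "(\<Sum>k<n. V / real n) < (\<Sum>k<n. d k)"
        using True k by (intro sum_strict_mono_ex1) auto
      then show False using tele n by simp
    qed
    have "cspec f n y"
      unfolding cspec_def
    proof (intro conjI allI impI)
      fix j assume j: "j < n"
      have "val f {y j..<y (Suc j)} = d j"
        unfolding d_def by (rule val_Ico[OF hf]) (use yr[of j] yr[of "Suc j"] yinc[OF j] j in auto)
      then show "val f {y j..<y (Suc j)} = val f {0..1} / real n" using deq[OF j] val01 V_def by simp
    qed (use y0 yn yinc yb in auto)
    then have ceq: "cuts f n = cuts f' n" using cuts_unique[OF hf n] y_def by simp
    show ?thesis
    proof (rule disjI1, intro allI impI)
      fix F :: "nat \<Rightarrow> real \<Rightarrow> real"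
      have "\<forall>l. cuts ((F(i := f')) l) n = cuts ((F(i := f)) l) n" using ceq by simp
      then have "alg3 n (F(i := f')) = alg3 n (F(i := f))" by (rule alg3_dep)
      then show "val f (alg3 n (F(i := f')) i) \<le> val f (alg3 n (F(i := f)) i)" by simp
    qed
  next
    case False
    then obtain m0 where m0: "m0 < n" and dm: "d m0 < V / real n" by (auto simp: not_le)
    obtain a where a01: "0 \<le> a" "a \<le> y m0" and alo: "1 \<le> m0 \<longrightarrow> y (m0 - 1) < a \<and> a < y m0"
      and aG: "Gf f (y (Suc m0)) - V / real n < Gf f a"
    proof (cases "m0 = 0")
      case True
      have "d 0 = Gf f (y (Suc 0))" unfolding d_def using y0 G0 by simp
      then have "Gf f (y (Suc m0)) - V / real n < Gf f 0" using dm True G0 by simp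
      moreover have "0 \<le> y m0" using yr[of m0] m0 by simp
      ultimately show ?thesis using True by (intro that[of 0]) simp_all
    next
      case False
      define p where "p = y (m0 - 1)"
      define q where "q = y m0"
      have pq: "p < q" "0 \<le> p" "q \<le> 1" using yinc[of "m0 - 1"] yr[of "m0-1"] yr[of m0] m0 False
        unfolding p_def q_def by auto
      have Gpq: "Gf f p < Gf f q" using G_strict[OF hf] pq by simp
      define \<tau> where "\<tau> = max (Gf f (y (Suc m0)) - V / real n) (Gf f p)"
      have dm': "Gf f (y (Suc m0)) - V / real n < Gf f q" using dm unfolding d_def q_def by simp
      have tq: "\<tau> < Gf f q" using Gpq dm' unfolding \<tau>_def by simp
      have tge: "Gf f (y (Suc m0)) - V / real n \<le> \<tau>" "Gf f p \<le> \<tau>" unfolding \<tau>_def by simp_all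
      define \<tau>' where "\<tau>' = (\<tau> + Gf f q) / 2"
      have t': "\<tau> < \<tau>'" "\<tau>' < Gf f q" using tq unfolding \<tau>'_def by simp_all
      have cont: "continuous_on {p..q} (Gf f)"
        by (rule continuous_on_subset[OF G_cont[OF hf]]) (use pq in auto)
      have "Gf f p \<le> \<tau>'" "\<tau>' \<le> Gf f q" using t' tge by linarith+
      then obtain a where a: "p \<le> a" "a \<le> q" "Gf f a = \<tau>'" using IVT'[OF _ _ _ cont] pq(1) by fastforce
      have "a \<noteq> p" using a(3) t' tge by auto
      then have ap: "p < a" using a(1) by simp
      have "a \<noteq> q" using a(3) t' by auto
      then have aq: "a < q" using a(2) by simp
      have "0 \<le> a" using ap pq by simp
      moreover have "a \<le> y m0" using aq q_def by simp
      moreover have "1 \<le> m0 \<longrightarrow> y (m0 - 1) < a \<and> a < y m0" using ap aq p_def q_def by simp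
      moreover have "Gf f (y (Suc m0)) - V / real n < Gf f a" using a(3) t' tge by linarith
      ultimately show ?thesis by (rule that)
    qed
    define z where "z k = (if k = 0 then 0 else if k < m0 then (y (k - 1) + y k) / 2
        else if k = m0 then a else if k < n then (y k + y (Suc k)) / 2 else 1)" for k
    have zm: "z m0 = a" unfolding z_def using m0 y0 a01 by auto
    have z0: "z 0 = 0" unfolding z_def by simp
    have zn: "z n = 1" unfolding z_def using n m0 by auto
    have zb: "\<forall>j>n. z j = 1" unfolding z_def using m0 by auto
    have blo: "y (k - 1) < z k \<and> z k < y k" if "1 \<le> k" "k \<le> m0" for k
    proof (cases "k = m0")
      case True then show ?thesis using alo zm that by simp
    next
      case False
      then have "k < m0" using that by simp
      moreover have "y (k - 1) < y k" using yinc[of "k-1"] that m0 by simp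
      ultimately show ?thesis unfolding z_def using that by auto
    qed
    have bhi: "y k < z k \<and> z k < y (Suc k)" if "m0 < k" "k < n" for k
    proof -
      have "y k < y (Suc k)" using yinc that by simp
      then show ?thesis unfolding z_def using that by auto
    qed
    have zm_le: "z m0 \<le> y m0" using zm a01 by simp
    have zSm: "y m0 < z (Suc m0)"
    proof (cases "Suc m0 < n")
      case True then show ?thesis using bhi[of "Suc m0"] yinc[of m0] by simp
    next
      case False then have "Suc m0 = n" using m0 by simp
      then show ?thesis using zn yn yinc[of m0] m0 by simp
    qed
    have inc: "\<forall>j<n. z j < z (Suc j)"
    proof (intro allI impI)
      fix j assume j: "j < n"
      consider "j < m0" | "j = m0" | "m0 < j" by linarith
      then show "z j < z (Suc j)"
      proof cases
        case 1
        have "z j \<le> y j"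
        proof (cases "j = 0")
          case True then show ?thesis using z0 y0 by simp
        next
          case False then show ?thesis using blo[of j] 1 by simp
        qed
        moreover have "y j < z (Suc j)" using blo[of "Suc j"] 1 by simp
        ultimately show ?thesis by simp
      next
        case 2 then show ?thesis using zSm zm_le by simp
      next
        case 3
        have "z j < y (Suc j)" using bhi[of j] 3 j by simp
        moreover have "y (Suc j) \<le> z (Suc j)"
        proof (cases "Suc j < n")
          case True then show ?thesis using bhi[of "Suc j"] 3 by simp
        next
          case False then have "Suc j = n" using j by simp
          then show ?thesis using zn yn by simp
        qed
        ultimately show ?thesis by simp
      qed
    qed
    obtain g where hg: "hungry g" and cg: "cuts g n = z" using step_density[OF n z0 zn inc zb] by blast
    define F where "F = (\<lambda>_::nat. g)"
    have Fh: "\<forall>j<n. j \<noteq> i \<longrightarrow> hungry (F j)" unfolding F_def using hg by simp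
    have Fi: "cuts ((F(i := f')) i) n = y" using y_def by simp
    have Fo: "\<forall>l. l \<noteq> i \<longrightarrow> cuts ((F(i := f')) l) n = z" using cg unfolding F_def by simp
    have zy: "\<forall>k. 1 \<le> k \<and> k \<le> m0 \<longrightarrow> z k < y k" using blo by blast
    have Vn: "val f {0..1} / real n = V / real n" using val01 V_def by simp
    have "val f (alg3 n (F(i := f')) i) < V / real n"
    proof (cases "Suc m0 < n")
      case True
      have yz: "y (Suc m0) < z (Suc m0)" using bhi[of "Suc m0"] True by simp
      have "alg3 n (F(i := f')) i = {z m0..<y (Suc m0)}" by (rule sim_mid[OF n i True Fi Fo z0 zy yz])
      moreover have "val f {a..<y (Suc m0)} = Gf f (y (Suc m0)) - Gf f a"
        by (rule val_Ico[OF hf]) (use a01 yinc[of m0] yr[of "Suc m0"] True in auto)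
      ultimately show ?thesis using zm aG by simp
    next
      case False
      then have mn: "m0 = n - 1" using m0 by simp
      have zy': "\<forall>k. 1 \<le> k \<and> k \<le> n - 1 \<longrightarrow> z k < y k" using zy mn by simp
      have "alg3 n (F(i := f')) i = {z (n - 1)..1}" by (rule sim_last[OF n i Fi Fo z0 zy'])
      moreover have "a \<le> 1" using a01 yr[of m0] m0 by simp
      then have "val f {a..1} = Gf f 1 - Gf f a" using val_Icc[OF hf, of a 1] a01 by simp
      moreover have "y (Suc m0) = 1" using mn n yn by simp
      ultimately show ?thesis using zm mn aG V_def by simp
    qed
    then have "val f (alg3 n (F(i := f')) i) < val f {0..1} / real n" unfolding Vn .
    then show ?thesis using Fh by (intro disjI2 exI[of _ F] conjI)
  qed
qed

end
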